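(* Let $K$ be a field, $S=K[x_1,\dots,x_n]$, $A\subseteq\{1,\dots,n\}$ and $f=\prod_{j\in A}x_j$. Let $J\subset I\subset S$ be monomial ideals and let $$\mathcal D:\ I/J=\bigoplus_{i=1}^r u_iK[Z_i]$$ be a Stanley decomposition of $I/J$ (so $u_i$ are monomials and $Z_i\subseteq\{x_1,\dots,x_n\}$). Put $C=\{i:\ x_j\in Z_i \text{ for all } j\in A\}$, and for $L\subseteq A$ put $f_L=\prod_{l\in L}x_l$ and $$Z_i^L=\{x_l^{-1}:\ l\in L,\ x_l\in Z_i\}\cup\{x_l:\ l\notin L,\ x_l\in Z_i\}.$$ Then $$\mathcal D_f:\ (I/J)_f=\bigoplus_{i\in C}\Big(\bigoplus_{L\subseteq A}u_if_L^{-1}K[Z_i^L]\Big)$$ is a Stanley decomposition of $(I/J)_f=I_f/J_f$. In particular, $\operatorname{sdepth} I/J\le \operatorname{sdepth}(I/J)_f$.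
   Context: $S_f$ denotes the localization $K[x_1,\dots,x_n,x_j^{-1}: j\in A]$. Its monomials are $x_1^{a_1}\cdots x_n^{a_n}$ with $a_j\in\mathbb Z$ for $j\in A$ and $a_j\in\mathbb N$ for $j\notin A$; they form a $K$-basis of $S_f$. A monomial ideal of $S_f$ is an ideal generated by monomials. For monomial ideals $J\subset I\subset S_f$, the residue classes of the monomials in $I\setminus J$ form a $K$-basis of $I/J$, and these classes are identified with the monomials in $I\setminus J$. For a monomial $u\in I\setminus J$ and a set $Z\subseteq\{x_1,\dots,x_n\}\cup\{x_j^{-1}: j\in A\}$ with $\{x_j,x_j^{-1}\}\not\subseteq Z$ for all $j\in A$, $uK[Z]$ denotes the $K$-subspace of $I/J$ spanned by the monomials $uw$, $w$ a monomial in the elements of $Z$; it is called a Stanley space of $I/J$ if it is a free $K[Z]$-submodule of $I/J$ (i.e. $uw\in I\setminus J$ for all such $w$). Its dimension is $|Z|$. A Stanley decomposition of $I/J$ is a decomposition of $I/J$ as a finite direct sum (of $K$-vector spaces) of Stanley spaces $\mathcal D: I/J=\bigoplus_{i=1}^r u_iK[Z_i]$; $\operatorname{sdepth}\mathcal D=\min_i |Z_i|$ and $\operatorname{sdepth}(I/J)$ is the maximum of $\operatorname{sdepth}\mathcal D$ over all Stanley decompositions $\mathcal D$ of $I/J$. For $A=\emptyset$ this is the usual notion for $S$. For $J\subset I\subset S$, $(I/J)_f=I_f/J_f$ with $I_f=IS_f$, $J_f=JS_f$ monomial ideals of $S_f$. *)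

theory Defs
  imports Main "HOL-Library.Extended_Nat"
begin

text \<open>Monomials of S_f = K[x_0,...,x_{n-1}, x_j^{-1} : j in A] are identified with their
  exponent vectors; variables are indexed by 0..n-1. Exponents are integers, zero outside {..<n}
  and nonnegative outside A. For A = {} these are the monomials of S.\<close>

type_synonym mon = "nat \<Rightarrow> int"

definition monoms :: "nat \<Rightarrow> nat set \<Rightarrow> mon set" where
  "monoms n A = {a. (\<forall>j. n \<le> j \<longrightarrow> a j = 0) \<and> (\<forall>j. j \<notin> A \<longrightarrow> 0 \<le> a j)}"

text \<open>A monomial ideal of S_f, given by the set of monomials it contains.\<close>
definition mono_ideal :: "nat \<Rightarrow> nat set \<Rightarrow> mon set \<Rightarrow> bool" where
  "mono_ideal n A I \<longleftrightarrow> I \<subseteq> monoms n A \<and> (\<forall>u\<in>I. \<forall>w\<in>monoms n A. (\<lambda>k. u k + w k) \<in> I)"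

text \<open>The monomials of the extension I S_f of a monomial ideal I of S.\<close>
definition loc :: "nat \<Rightarrow> nat set \<Rightarrow> mon set \<Rightarrow> mon set" where
  "loc n A I = {v. \<exists>u\<in>I. \<exists>w\<in>monoms n A. v = (\<lambda>k. u k + w k)}"

text \<open>Generators: (j, True) stands for x_j, (j, False) for x_j^{-1}.\<close>
definition valid_vars :: "nat \<Rightarrow> nat set \<Rightarrow> (nat \<times> bool) set \<Rightarrow> bool" where
  "valid_vars n A Z \<longleftrightarrow> Z \<subseteq> ({..<n} \<times> {True}) \<union> (A \<times> {False})
     \<and> (\<forall>j. \<not> ((j, True) \<in> Z \<and> (j, False) \<in> Z))"

definition mono_span :: "(nat \<times> bool) set \<Rightarrow> mon set" where
  "mono_span Z = {w. \<exists>c :: nat \<times> bool \<Rightarrow> nat. w = (\<lambda>k.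
      (if (k, True) \<in> Z then int (c (k, True)) else 0)
    - (if (k, False) \<in> Z then int (c (k, False)) else 0))}"

definition sspace :: "mon \<Rightarrow> (nat \<times> bool) set \<Rightarrow> mon set" where
  "sspace u Z = (\<lambda>w k. u k + w k) ` mono_span Z"

text \<open>u K[Z] is a Stanley space of the quotient whose monomial basis is M (= I \ J).\<close>
definition stanley_space :: "nat \<Rightarrow> nat set \<Rightarrow> mon set \<Rightarrow> mon \<Rightarrow> (nat \<times> bool) set \<Rightarrow> bool" where
  "stanley_space n A M u Z \<longleftrightarrow> valid_vars n A Z \<and> u \<in> monoms n A \<and> sspace u Z \<subseteq> M"

text \<open>Stanley decomposition indexed by a finite set P: the spans of the disjoint monomial sets
  sspace (u p) (Z p) form a direct sum equal to the span of M.\<close>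
definition stanley_decomp :: "nat \<Rightarrow> nat set \<Rightarrow> mon set \<Rightarrow> 'i set \<Rightarrow> ('i \<Rightarrow> mon)
    \<Rightarrow> ('i \<Rightarrow> (nat \<times> bool) set) \<Rightarrow> bool" where
  "stanley_decomp n A M P u Z \<longleftrightarrow> finite P
     \<and> (\<forall>p\<in>P. stanley_space n A M (u p) (Z p))
     \<and> (\<forall>p\<in>P. \<forall>q\<in>P. p \<noteq> q \<longrightarrow> sspace (u p) (Z p) \<inter> sspace (u q) (Z q) = {})
     \<and> (\<Union>p\<in>P. sspace (u p) (Z p)) = M"

definition sdepth_decomp :: "'i set \<Rightarrow> ('i \<Rightarrow> (nat \<times> bool) set) \<Rightarrow> enat" where
  "sdepth_decomp P Z = (INF p\<in>P. enat (card (Z p)))"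

definition sdepth :: "nat \<Rightarrow> nat set \<Rightarrow> mon set \<Rightarrow> enat" where
  "sdepth n A M = (SUP D\<in>{(P :: (nat \<times> nat set) set, u, Z). stanley_decomp n A M P u Z}.
      (case D of (P, u, Z) \<Rightarrow> sdepth_decomp P Z))"

end

theory Submission imports Defs begin

lemma sspace_iff:
  assumes "\<forall>j. \<not> ((j, True) \<in> Z \<and> (j, False) \<in> Z)"
  shows "v \<in> sspace u Z \<longleftrightarrow> (\<forall>k. ((k,True)\<in>Z \<longrightarrow> u k \<le> v k) \<and> ((k,False)\<in>Z \<longrightarrow> v k \<le> u k)
            \<and> ((k,True)\<notin>Z \<longrightarrow> (k,False)\<notin>Z \<longrightarrow> v k = u k))"
proof
  assume "v \<in> sspace u Z"
  then obtain c where "v = (\<lambda>k. u k + ((if (k,True)\<in>Z then int (c (k,True)) else 0)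
      - (if (k,False)\<in>Z then int (c (k,False)) else 0)))"
    unfolding sspace_def mono_span_def by auto
  then show "\<forall>k. ((k,True)\<in>Z \<longrightarrow> u k \<le> v k) \<and> ((k,False)\<in>Z \<longrightarrow> v k \<le> u k)
            \<and> ((k,True)\<notin>Z \<longrightarrow> (k,False)\<notin>Z \<longrightarrow> v k = u k)" using assms by auto
next
  assume R: "\<forall>k. ((k,True)\<in>Z \<longrightarrow> u k \<le> v k) \<and> ((k,False)\<in>Z \<longrightarrow> v k \<le> u k)
            \<and> ((k,True)\<notin>Z \<longrightarrow> (k,False)\<notin>Z \<longrightarrow> v k = u k)"
  define c where "c = (\<lambda>(k,b). if b then nat (v k - u k) else nat (u k - v k))"
  define w where "w = (\<lambda>k. (if (k,True)\<in>Z then int (c (k,True)) else 0)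
      - (if (k,False)\<in>Z then int (c (k,False)) else 0))"
  have "v = (\<lambda>k. u k + w k)"
  proof
    fix k show "v k = u k + w k" using R assms
      by (cases "(k,True)\<in>Z"; cases "(k,False)\<in>Z") (auto simp: c_def w_def)
  qed
  moreover have "w \<in> mono_span Z" unfolding mono_span_def w_def by blast
  ultimately show "v \<in> sspace u Z" unfolding sspace_def by blast
qed

lemma sspace_S:
  assumes "valid_vars n {} Z"
  shows "v \<in> sspace u Z \<longleftrightarrow> (\<forall>k. ((k,True)\<in>Z \<longrightarrow> u k \<le> v k) \<and> ((k,True)\<notin>Z \<longrightarrow> v k = u k))"
proof -
  have F: "(k,False) \<notin> Z" for k using assms unfolding valid_vars_def by auto
  show ?thesis using F by (subst sspace_iff) (auto simp: F)
qed

lemma sspace_f: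
  assumes "valid_vars n {} Zp" "L \<subseteq> A" "\<forall>j\<in>A. (j,True)\<in>Zp"
  shows "v \<in> sspace (\<lambda>k. up k - (if k\<in>L then 1 else 0))
     ({(l, False) | l. l \<in> L \<and> (l, True) \<in> Zp} \<union> {(l, True) | l. l \<notin> L \<and> (l, True) \<in> Zp})
   \<longleftrightarrow> (\<forall>k. (k\<in>L \<longrightarrow> v k < up k) \<and> (k\<notin>L \<and> (k,True)\<in>Zp \<longrightarrow> up k \<le> v k)
          \<and> ((k,True)\<notin>Zp \<longrightarrow> v k = up k))"
proof -
  have F: "(k,False) \<notin> Zp" for k using assms unfolding valid_vars_def by auto
  show ?thesis
  proof (subst sspace_iff)
    have KL: "\<And>k. k\<in>L \<Longrightarrow> (k,True)\<in>Zp" using assms(2,3) by blast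
    show "\<forall>j. \<not> ((j, True) \<in> {(l, False) | l. l \<in> L \<and> (l, True) \<in> Zp} \<union> {(l, True) | l. l \<notin> L \<and> (l, True) \<in> Zp} \<and> (j, False) \<in> {(l, False) | l. l \<in> L \<and> (l, True) \<in> Zp} \<union> {(l, True) | l. l \<notin> L \<and> (l, True) \<in> Zp})" by blast
    have E: "\<And>k b. (k,b) \<in> {(l, False) | l. l \<in> L \<and> (l, True) \<in> Zp} \<union> {(l, True) | l. l \<notin> L \<and> (l, True) \<in> Zp}
       \<longleftrightarrow> (k,True) \<in> Zp \<and> (b \<longleftrightarrow> k \<notin> L)" by auto
    show "(\<forall>k. ((k,True)\<in>{(l, False) | l. l \<in> L \<and> (l, True) \<in> Zp} \<union> {(l, True) | l. l \<notin> L \<and> (l, True) \<in> Zp} \<longrightarrow> up k - (if k\<in>L then 1 else 0) \<le> v k) \<and> ((k,False)\<in>{(l, False) | l. l \<in> L \<and> (l, True) \<in> Zp} \<union> {(l, True) | l. l \<notin> L \<and> (l, True) \<in> Zp} \<longrightarrow> v k \<le> up k - (if k\<in>L then 1 else 0))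
            \<and> ((k,True)\<notin>{(l, False) | l. l \<in> L \<and> (l, True) \<in> Zp} \<union> {(l, True) | l. l \<notin> L \<and> (l, True) \<in> Zp} \<longrightarrow> (k,False)\<notin>{(l, False) | l. l \<in> L \<and> (l, True) \<in> Zp} \<union> {(l, True) | l. l \<notin> L \<and> (l, True) \<in> Zp} \<longrightarrow> v k = up k - (if k\<in>L then 1 else 0)))
   \<longleftrightarrow> (\<forall>k. (k\<in>L \<longrightarrow> v k < up k) \<and> (k\<notin>L \<and> (k,True)\<in>Zp \<longrightarrow> up k \<le> v k)
          \<and> ((k,True)\<notin>Zp \<longrightarrow> v k = up k))"
      unfolding E using KL by (auto; fastforce)
  qed
qed


lemma sum_bound:
  assumes "finite A" "k \<in> A" "(\<Sum>k\<in>A. nat (f k)) \<le> N"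
  shows "f k \<le> int N"
proof -
  have "nat (f k) \<le> (\<Sum>k\<in>A. nat (f k))" using assms by (intro member_le_sum) auto
  then show ?thesis using assms(3) by linarith
qed

lemma locD:
  assumes "A \<subseteq> {..<n}" "mono_ideal n {} I" "v \<in> loc n A I"
  shows "\<exists>N. \<forall>N'\<ge>N. (\<lambda>k. v k + (if k\<in>A then int N' else 0)) \<in> I"
proof -
  obtain m w where m: "m\<in>I" "w \<in> monoms n A" "v = (\<lambda>k. m k + w k)"
    using assms(3) unfolding loc_def by auto
  define N where "N = (\<Sum>k\<in>A. nat (- w k))"
  have fA: "finite A" using assms(1) finite_subset by blast
  have "(\<lambda>k. v k + (if k\<in>A then int N' else 0)) \<in> I" if "N' \<ge> N" for N'
  proof -
    have b: "- w k \<le> int N'" if "k \<in> A" for k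
    proof -
      have "(\<Sum>k\<in>A. nat (- w k)) \<le> N'" using \<open>N' \<ge> N\<close> unfolding N_def .
      from sum_bound[OF fA that this] show ?thesis .
    qed
    have "(\<lambda>k. w k + (if k\<in>A then int N' else 0)) \<in> monoms n {}"
      unfolding monoms_def
    proof (intro CollectI conjI allI impI)
      fix j
      have w: "\<forall>j. n \<le> j \<longrightarrow> w j = 0" "\<forall>j. j \<notin> A \<longrightarrow> 0 \<le> w j" using m(2) unfolding monoms_def by auto
      show "w j + (if j \<in> A then int N' else 0) = 0" if "n \<le> j"
        using that w assms(1) by auto
      show "0 \<le> w j + (if j \<in> A then int N' else 0)"
        using w b[of j] by (cases "j \<in> A") auto
    qed
    moreover have idl: "\<forall>u\<in>I. \<forall>w\<in>monoms n {}. (\<lambda>k. u k + w k) \<in> I"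
      using assms(2) unfolding mono_ideal_def by (rule conjunct2)
    ultimately have "(\<lambda>k. m k + (w k + (if k\<in>A then int N' else 0))) \<in> I"
      using m(1) by (rule_tac idl[rule_format])
    then show ?thesis by (simp add: m(3) add.assoc)
  qed
  then show ?thesis by (intro exI allI impI)
qed

lemma locI:
  "x \<in> I \<Longrightarrow> w \<in> monoms n A \<Longrightarrow> v = (\<lambda>k. x k + w k) \<Longrightarrow> v \<in> loc n A I"
  unfolding loc_def by auto

lemma main_gen:
  fixes P :: "'i set" and u :: "'i \<Rightarrow> mon" and Z :: "'i \<Rightarrow> (nat \<times> bool) set"
  assumes A: "A \<subseteq> {..<n}" and I: "mono_ideal n {} I" and J: "mono_ideal n {} J"
    and D: "stanley_decomp n {} (I - J) P u Z"
  shows "stanley_decomp n A (loc n A I - loc n A J)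
           {(i, L). i \<in> P \<and> (\<forall>j\<in>A. (j, True) \<in> Z i) \<and> L \<subseteq> A}
           (\<lambda>(i, L). (\<lambda>k. u i k - (if k \<in> L then 1 else 0)))
           (\<lambda>(i, L). {(l, False) | l. l \<in> L \<and> (l, True) \<in> Z i}
                   \<union> {(l, True) | l. l \<notin> L \<and> (l, True) \<in> Z i})"
proof -
  define Pf where "Pf = {(i, L). i \<in> P \<and> (\<forall>j\<in>A. (j, True) \<in> Z i) \<and> L \<subseteq> A}"
  define uf where "uf = (\<lambda>(i, L). (\<lambda>k. u i k - (if k \<in> L then 1 else (0::int))))"
  define Zf where "Zf = (\<lambda>(i, L). {(l, False) | l. l \<in> L \<and> (l, True) \<in> Z i}
                   \<union> {(l, True) | l. l \<notin> L \<and> (l, True) \<in> Z i})"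
  have fA: "finite A" using A finite_subset by blast
  have finP: "finite P" using D unfolding stanley_decomp_def by blast
  have vv: "valid_vars n {} (Z p)" and um: "u p \<in> monoms n {}" and sub: "sspace (u p) (Z p) \<subseteq> I - J"
    if "p \<in> P" for p using D that unfolding stanley_decomp_def stanley_space_def by blast+
  have disj: "sspace (u p) (Z p) \<inter> sspace (u q) (Z q) = {}" if "p\<in>P" "q\<in>P" "p\<noteq>q" for p q
    using D that unfolding stanley_decomp_def by blast
  have cov: "(\<Union>p\<in>P. sspace (u p) (Z p)) = I - J" using D unfolding stanley_decomp_def by blast
  have ZT: "k < n" if "p\<in>P" "(k,b) \<in> Z p" for p k b using vv[OF that(1)] that(2) unfolding valid_vars_def by auto
  have ZTb: "b" if "p\<in>P" "(k,b) \<in> Z p" for p k b using vv[OF that(1)] that(2) unfolding valid_vars_def by auto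
  note SS = sspace_S[OF vv]
  have SF: "v \<in> sspace (uf (p,L)) (Zf (p,L)) \<longleftrightarrow> (\<forall>k. (k\<in>L \<longrightarrow> v k < u p k) \<and> (k\<notin>L \<and> (k,True)\<in>Z p \<longrightarrow> u p k \<le> v k)
          \<and> ((k,True)\<notin>Z p \<longrightarrow> v k = u p k))" if "(p,L) \<in> Pf" for p L v
    using that sspace_f[OF vv, of p L A] unfolding Pf_def uf_def Zf_def by auto
  have bump: "(\<lambda>k. v k + (if k\<in>A then int N else 0)) \<in> sspace (u p) (Z p)"
    if "p \<in> P" "\<forall>j\<in>A. (j, True) \<in> Z p"
       "\<forall>k. k \<notin> A \<longrightarrow> ((k,True)\<in>Z p \<longrightarrow> u p k \<le> v k) \<and> ((k,True)\<notin>Z p \<longrightarrow> v k = u p k)"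
       "\<forall>k\<in>A. u p k - v k \<le> int N" for p v N
    unfolding SS[OF that(1)] apply (intro allI)
    subgoal for k using that(2-4) by (cases "k \<in> A") auto
    done
  have part1: "finite Pf"
  proof -
    have "Pf \<subseteq> P \<times> Pow A" unfolding Pf_def by auto
    then show ?thesis using finP fA finite_subset by blast
  qed
  have part2: "stanley_space n A (loc n A I - loc n A J) (uf q) (Zf q)" if q: "q \<in> Pf" for q
  proof -
    obtain p L where qpL: "q = (p,L)" and p: "p \<in> P" and pA: "\<forall>j\<in>A. (j, True) \<in> Z p" and LA: "L \<subseteq> A"
      using q unfolding Pf_def by auto
    have "valid_vars n A (Zf q)"
      unfolding valid_vars_def qpL Zf_def using ZT[OF p] LA by auto
    moreover have "uf q \<in> monoms n A"
      using um[OF p] LA A unfolding monoms_def qpL uf_def by auto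
    moreover have "sspace (uf q) (Zf q) \<subseteq> loc n A I - loc n A J"
    proof
      fix v assume v: "v \<in> sspace (uf q) (Zf q)"
      have vc: "\<forall>k. (k\<in>L \<longrightarrow> v k < u p k) \<and> (k\<notin>L \<and> (k,True)\<in>Z p \<longrightarrow> u p k \<le> v k)
          \<and> ((k,True)\<notin>Z p \<longrightarrow> v k = u p k)" using v SF[OF q[unfolded qpL]] qpL by simp
      define x where "x = (\<lambda>k. if k \<in> L then u p k else v k)"
      have "x \<in> sspace (u p) (Z p)" unfolding SS[OF p] x_def using vc LA pA by auto
      then have xI: "x \<in> I" using sub[OF p] by blast
      have "(\<lambda>k. if k \<in> L then v k - u p k else 0) \<in> monoms n A"
        unfolding monoms_def using LA A by auto
      then have vI: "v \<in> loc n A I" by (rule locI[OF xI]) (auto simp: x_def)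
      have "v \<notin> loc n A J"
      proof
        assume "v \<in> loc n A J"
        then obtain N where N: "\<forall>N'\<ge>N. (\<lambda>k. v k + (if k\<in>A then int N' else 0)) \<in> J"
          using locD[OF A J] by blast
        define N' where "N' = N + (\<Sum>k\<in>A. nat (u p k - v k))"
        have "N \<le> N'" unfolding N'_def by (rule le_add1)
        then have "(\<lambda>k. v k + (if k\<in>A then int N' else 0)) \<in> J" using N by blast
        moreover have "(\<lambda>k. v k + (if k\<in>A then int N' else 0)) \<in> sspace (u p) (Z p)"
        proof (rule bump[OF p pA])
          show "\<forall>k. k \<notin> A \<longrightarrow> ((k,True)\<in>Z p \<longrightarrow> u p k \<le> v k) \<and> ((k,True)\<notin>Z p \<longrightarrow> v k = u p k)"
            using vc LA by auto
          show "\<forall>k\<in>A. u p k - v k \<le> int N'"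
          proof
            fix k assume k: "k \<in> A"
            have "(\<Sum>k\<in>A. nat (u p k - v k)) \<le> N'" unfolding N'_def by (rule le_add2)
            from sum_bound[OF fA k this] show "u p k - v k \<le> int N'" .
          qed
        qed
        ultimately show False using sub[OF p] by blast
      qed
      then show "v \<in> loc n A I - loc n A J" using vI by blast
    qed
    ultimately show ?thesis unfolding stanley_space_def by blast
  qed
  have part3: "sspace (uf q) (Zf q) \<inter> sspace (uf q') (Zf q') = {}"
    if q: "q \<in> Pf" and q': "q' \<in> Pf" and ne: "q \<noteq> q'" for q q'
  proof (rule ccontr)
    assume "sspace (uf q) (Zf q) \<inter> sspace (uf q') (Zf q') \<noteq> {}"
    then obtain v where v1: "v \<in> sspace (uf q) (Zf q)" and v2: "v \<in> sspace (uf q') (Zf q')" by blast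
    obtain p L where qpL: "q = (p,L)" and p: "p \<in> P" and pA: "\<forall>j\<in>A. (j, True) \<in> Z p" and LA: "L \<subseteq> A"
      using q unfolding Pf_def by auto
    obtain p' L' where qpL': "q' = (p',L')" and p': "p' \<in> P" and pA': "\<forall>j\<in>A. (j, True) \<in> Z p'" and LA': "L' \<subseteq> A"
      using q' unfolding Pf_def by auto
    have vc: "\<forall>k. (k\<in>L \<longrightarrow> v k < u p k) \<and> (k\<notin>L \<and> (k,True)\<in>Z p \<longrightarrow> u p k \<le> v k)
          \<and> ((k,True)\<notin>Z p \<longrightarrow> v k = u p k)" using v1 SF[OF q[unfolded qpL]] qpL by simp
    have vc': "\<forall>k. (k\<in>L' \<longrightarrow> v k < u p' k) \<and> (k\<notin>L' \<and> (k,True)\<in>Z p' \<longrightarrow> u p' k \<le> v k)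
          \<and> ((k,True)\<notin>Z p' \<longrightarrow> v k = u p' k)" using v2 SF[OF q'[unfolded qpL']] qpL' by simp
    show False
    proof (cases "p = p'")
      case True
      then have "L \<noteq> L'" using ne qpL qpL' by simp
      then obtain l where "(l \<in> L \<and> l \<notin> L') \<or> (l \<in> L' \<and> l \<notin> L)" by blast
      then show False
      proof
        assume l: "l \<in> L \<and> l \<notin> L'"
        then have "(l, True) \<in> Z p'" using LA pA True by blast
        then show False using vc[rule_format, of l] vc'[rule_format, of l] l True by auto
      next
        assume l: "l \<in> L' \<and> l \<notin> L"
        then have "(l, True) \<in> Z p" using LA' pA' True by blast
        then show False using vc[rule_format, of l] vc'[rule_format, of l] l True by auto
      qed
    next
      case False
      define N where "N = (\<Sum>k\<in>A. nat (u p k - v k)) + (\<Sum>k\<in>A. nat (u p' k - v k))"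
      have "(\<lambda>k. v k + (if k\<in>A then int N else 0)) \<in> sspace (u p) (Z p)"
      proof (rule bump[OF p pA])
        show "\<forall>k. k \<notin> A \<longrightarrow> ((k,True)\<in>Z p \<longrightarrow> u p k \<le> v k) \<and> ((k,True)\<notin>Z p \<longrightarrow> v k = u p k)"
          using vc LA by auto
        show "\<forall>k\<in>A. u p k - v k \<le> int N"
        proof
          fix k assume k: "k \<in> A"
          have "(\<Sum>k\<in>A. nat (u p k - v k)) \<le> N" unfolding N_def by (rule le_add1)
          from sum_bound[OF fA k this] show "u p k - v k \<le> int N" .
        qed
      qed
      moreover have "(\<lambda>k. v k + (if k\<in>A then int N else 0)) \<in> sspace (u p') (Z p')"
      proof (rule bump[OF p' pA'])
        show "\<forall>k. k \<notin> A \<longrightarrow> ((k,True)\<in>Z p' \<longrightarrow> u p' k \<le> v k) \<and> ((k,True)\<notin>Z p' \<longrightarrow> v k = u p' k)"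
          using vc' LA' by auto
        show "\<forall>k\<in>A. u p' k - v k \<le> int N"
        proof
          fix k assume k: "k \<in> A"
          have "(\<Sum>k\<in>A. nat (u p' k - v k)) \<le> N" unfolding N_def by (rule le_add2)
          from sum_bound[OF fA k this] show "u p' k - v k \<le> int N" .
        qed
      qed
      ultimately show False using disj[OF p p' False] by blast
    qed
  qed
  have part4: "(\<Union>q\<in>Pf. sspace (uf q) (Zf q)) = loc n A I - loc n A J"
  proof
    show "(\<Union>q\<in>Pf. sspace (uf q) (Zf q)) \<subseteq> loc n A I - loc n A J"
      using part2 unfolding stanley_space_def by blast
  next
    show "loc n A I - loc n A J \<subseteq> (\<Union>q\<in>Pf. sspace (uf q) (Zf q))"
    proof
      fix v assume v: "v \<in> loc n A I - loc n A J"
      obtain N0 where N0: "\<forall>N'\<ge>N0. (\<lambda>k. v k + (if k\<in>A then int N' else 0)) \<in> I"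
        using locD[OF A I] v by blast
      define N where "N = N0 + (\<Sum>p\<in>P. \<Sum>k\<in>A. nat (u p k - v k)) + 1"
      define y where "y = (\<lambda>k. v k + (if k\<in>A then int N else 0))"
      have "N0 \<le> N" unfolding N_def by linarith
      then have yI: "y \<in> I" unfolding y_def using N0 by blast
      have bnd: "u p k - v k < int N" if "p \<in> P" "k \<in> A" for p k
      proof -
        have "nat (u p k - v k) \<le> (\<Sum>k\<in>A. nat (u p k - v k))" using that fA by (intro member_le_sum) auto
        also have "\<dots> \<le> (\<Sum>p\<in>P. \<Sum>k\<in>A. nat (u p k - v k))" using that finP
          by (intro member_le_sum[where f="\<lambda>p. \<Sum>k\<in>A. nat (u p k - v k)"]) auto
        finally have "nat (u p k - v k) < N" unfolding N_def by linarith
        then show ?thesis by linarith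
      qed
      have "y \<notin> J"
      proof
        assume "y \<in> J"
        moreover have "(\<lambda>k. if k\<in>A then - int N else 0) \<in> monoms n A" unfolding monoms_def using A by auto
        ultimately have "v \<in> loc n A J" by (rule locI) (auto simp: y_def)
        then show False using v by blast
      qed
      then obtain p where p: "p \<in> P" and yp: "y \<in> sspace (u p) (Z p)" using yI cov by blast
      have yc: "\<forall>k. ((k,True)\<in>Z p \<longrightarrow> u p k \<le> y k) \<and> ((k,True)\<notin>Z p \<longrightarrow> y k = u p k)"
        using yp SS[OF p] by blast
      have pA: "\<forall>j\<in>A. (j, True) \<in> Z p"
      proof
        fix j assume j: "j \<in> A"
        show "(j, True) \<in> Z p"
        proof (rule ccontr)
          assume "(j, True) \<notin> Z p"
          then have "y j = u p j" using yc by blast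
          then show False using bnd[OF p j] j y_def by simp
        qed
      qed
      define L where "L = {j \<in> A. v j < u p j}"
      have q: "(p, L) \<in> Pf" unfolding Pf_def L_def using p pA by auto
      have "v \<in> sspace (uf (p,L)) (Zf (p,L))"
        unfolding SF[OF q]
      proof (intro allI conjI impI)
        fix k
        show "k \<in> L \<Longrightarrow> v k < u p k" unfolding L_def by simp
        show "k \<notin> L \<and> (k, True) \<in> Z p \<Longrightarrow> u p k \<le> v k"
          using yc unfolding L_def y_def by (cases "k \<in> A") auto
        assume kZ: "(k, True) \<notin> Z p"
        then have "k \<notin> A" using pA by blast
        moreover have "y k = u p k" using yc kZ by blast
        ultimately show "v k = u p k" unfolding y_def by simp
      qed
      then show "v \<in> (\<Union>q\<in>Pf. sspace (uf q) (Zf q))" using q by blast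
    qed
  qed
  have "stanley_decomp n A (loc n A I - loc n A J) Pf uf Zf"
    unfolding stanley_decomp_def
  proof (intro conjI ballI impI)
    show "finite Pf" by (rule part1)
    show "stanley_space n A (loc n A I - loc n A J) (uf q) (Zf q)" if "q \<in> Pf" for q using that by (rule part2)
    show "sspace (uf p) (Zf p) \<inter> sspace (uf q) (Zf q) = {}" if "p \<in> Pf" "q \<in> Pf" "p \<noteq> q" for p q
      using that by (rule part3)
    show "(\<Union>q\<in>Pf. sspace (uf q) (Zf q)) = loc n A I - loc n A J" by (rule part4)
  qed
  then show ?thesis unfolding Pf_def uf_def Zf_def .
qed


lemma reindex:
  assumes f: "bij_betw f Q P" and D: "stanley_decomp n A M P u Z"
  shows "stanley_decomp n A M Q (\<lambda>q. u (f q)) (\<lambda>q. Z (f q))"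
proof -
  have fP: "finite P" using D unfolding stanley_decomp_def by blast
  have inj: "inj_on f Q" and im: "f ` Q = P" using f unfolding bij_betw_def by auto
  have "finite Q" using fP inj im finite_imageD by blast
  moreover have "\<forall>q\<in>Q. stanley_space n A M (u (f q)) (Z (f q))"
    using D im unfolding stanley_decomp_def by blast
  moreover have "\<forall>p\<in>Q. \<forall>q\<in>Q. p \<noteq> q \<longrightarrow> sspace (u (f p)) (Z (f p)) \<inter> sspace (u (f q)) (Z (f q)) = {}"
  proof (intro ballI impI)
    fix p q assume "p \<in> Q" "q \<in> Q" "p \<noteq> q"
    then have "f p \<in> P" "f q \<in> P" "f p \<noteq> f q" using inj im unfolding inj_on_def by auto
    then show "sspace (u (f p)) (Z (f p)) \<inter> sspace (u (f q)) (Z (f q)) = {}"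
      using D unfolding stanley_decomp_def by blast
  qed
  moreover have "(\<Union>q\<in>Q. sspace (u (f q)) (Z (f q))) = M"
  proof -
    have "(\<Union>q\<in>Q. sspace (u (f q)) (Z (f q))) = (\<Union>p\<in>f ` Q. sspace (u p) (Z p))" by simp
    also have "\<dots> = M" using D im unfolding stanley_decomp_def by simp
    finally show ?thesis .
  qed
  ultimately show ?thesis unfolding stanley_decomp_def by blast
qed

lemma card_Zf:
  fixes Zp :: "(nat \<times> bool) set"
  assumes "\<forall>x\<in>Zp. snd x"
  shows "card ({(l, False) | l. l \<in> L \<and> (l, True) \<in> Zp} \<union> {(l, True) | l. l \<notin> L \<and> (l, True) \<in> Zp}) = card Zp"
proof -
  have "{(l, False) | l. l \<in> L \<and> (l, True) \<in> Zp} \<union> {(l, True) | l. l \<notin> L \<and> (l, True) \<in> Zp}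
      = (\<lambda>(l,b). (l, l \<notin> L)) ` Zp"
  proof (rule set_eqI)
    fix x :: "nat \<times> bool"
    obtain k b where x: "x = (k, b)" by fastforce
    have "(k, False) \<notin> Zp" using assms by fastforce
    then show "x \<in> {(l, False) | l. l \<in> L \<and> (l, True) \<in> Zp} \<union> {(l, True) | l. l \<notin> L \<and> (l, True) \<in> Zp}
      \<longleftrightarrow> x \<in> (\<lambda>(l,b). (l, l \<notin> L)) ` Zp"
      unfolding x image_iff by (cases b; auto intro!: bexI[of _ "(k,True)"]; metis (full_types))
  qed
  moreover have "inj_on (\<lambda>(l,b). (l, l \<notin> L)) Zp"
    using assms unfolding inj_on_def by auto
  ultimately show ?thesis by (simp add: card_image)
qed

theorem theorem3p1:
  fixes n r :: nat and A :: "nat set" and I J :: "mon set"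
    and u :: "nat \<Rightarrow> mon" and Z :: "nat \<Rightarrow> (nat \<times> bool) set"
  assumes "A \<subseteq> {..<n}"
    and "mono_ideal n {} I" and "mono_ideal n {} J" and "J \<subset> I"
    and "stanley_decomp n {} (I - J) {..<r} u Z"
  shows "(stanley_decomp n A (loc n A I - loc n A J)
           {(i, L). i < r \<and> (\<forall>j\<in>A. (j, True) \<in> Z i) \<and> L \<subseteq> A}
           (\<lambda>(i, L). (\<lambda>k. u i k - (if k \<in> L then 1 else 0)))
           (\<lambda>(i, L). {(l, False) | l. l \<in> L \<and> (l, True) \<in> Z i}
                   \<union> {(l, True) | l. l \<notin> L \<and> (l, True) \<in> Z i}))
    \<and> sdepth n {} (I - J) \<le> sdepth n A (loc n A I - loc n A J)"
proof
  show "stanley_decomp n A (loc n A I - loc n A J)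
           {(i, L). i < r \<and> (\<forall>j\<in>A. (j, True) \<in> Z i) \<and> L \<subseteq> A}
           (\<lambda>(i, L). (\<lambda>k. u i k - (if k \<in> L then 1 else 0)))
           (\<lambda>(i, L). {(l, False) | l. l \<in> L \<and> (l, True) \<in> Z i}
                   \<union> {(l, True) | l. l \<notin> L \<and> (l, True) \<in> Z i})"
    using main_gen[OF assms(1,2,3,5)] by simp
  show "sdepth n {} (I - J) \<le> sdepth n A (loc n A I - loc n A J)"
    unfolding sdepth_def
  proof (rule SUP_mono)
    fix D assume "D \<in> {(P :: (nat \<times> nat set) set, u, Z). stanley_decomp n {} (I - J) P u Z}"
    then obtain P u0 Z0 where DD: "D = (P, u0, Z0)" and dec: "stanley_decomp n {} (I - J) P u0 Z0"
      by auto
    have "finite P" using dec unfolding stanley_decomp_def by blast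
    then obtain h where h: "bij_betw h {0..<card P} P" using ex_bij_betw_nat_finite by blast
    define Q where "Q = {0..<card P}"
    have dec': "stanley_decomp n {} (I - J) Q (\<lambda>q. u0 (h q)) (\<lambda>q. Z0 (h q))"
      using reindex[OF h dec] unfolding Q_def .
    define Pf where "Pf = {(i, L). i \<in> Q \<and> (\<forall>j\<in>A. (j, True) \<in> Z0 (h i)) \<and> L \<subseteq> A}"
    define uf where "uf = (\<lambda>(i, L). (\<lambda>k. u0 (h i) k - (if k \<in> L then 1 else (0::int))))"
    define Zf where "Zf = (\<lambda>(i, L). {(l, False) | l. l \<in> L \<and> (l, True) \<in> Z0 (h i)}
                   \<union> {(l, True) | l. l \<notin> L \<and> (l, True) \<in> Z0 (h i)})"
    have decf: "stanley_decomp n A (loc n A I - loc n A J) Pf uf Zf"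
      using main_gen[OF assms(1,2,3) dec'] unfolding Pf_def uf_def Zf_def .
    have "sdepth_decomp P Z0 \<le> sdepth_decomp Pf Zf"
      unfolding sdepth_decomp_def
    proof (rule INF_greatest)
      fix q assume q: "q \<in> Pf"
      then obtain i L where qq: "q = (i, L)" and i: "i \<in> Q" unfolding Pf_def by auto
      have hi: "h i \<in> P" using h i unfolding Q_def bij_betw_def by auto
      have vv: "valid_vars n {} (Z0 (h i))" using dec hi unfolding stanley_decomp_def stanley_space_def by blast
      then have "\<forall>x\<in>Z0 (h i). snd x" unfolding valid_vars_def by auto
      then have "card (Zf q) = card (Z0 (h i))" unfolding qq Zf_def by (simp add: card_Zf)
      moreover have "(INF p\<in>P. enat (card (Z0 p))) \<le> enat (card (Z0 (h i)))" using hi by (rule INF_lower)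
      ultimately show "(INF p\<in>P. enat (card (Z0 p))) \<le> enat (card (Zf q))" by simp
    qed
    moreover have "(Pf, uf, Zf) \<in> {(P :: (nat \<times> nat set) set, u, Z). stanley_decomp n A (loc n A I - loc n A J) P u Z}"
      using decf by simp
    ultimately show "\<exists>m\<in>{(P :: (nat \<times> nat set) set, u, Z). stanley_decomp n A (loc n A I - loc n A J) P u Z}.
        (case D of (P, u, Z) \<Rightarrow> sdepth_decomp P Z) \<le> (case m of (P, u, Z) \<Rightarrow> sdepth_decomp P Z)"
      unfolding DD by force
  qed
qed

end
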